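(* Let $G$ be a connected cograph with cotree $T$, let $w_1,\ldots,w_t$ be the children of the root of $T$, and for each $i$ let $G_i$ be the subgraph of $G$ induced by the leaves of the subtree of $T$ rooted at $w_i$. Then the family of sets $S_i=V(G)\setminus V(G_i)$, $i=1,\ldots,t$, is exactly the family of all minimal vertex separators of $G$.
   Context: A cograph is a graph that can be built from single vertices by repeatedly taking disjoint unions (label 0) and joins (label 1). The cotree of a cograph is the unique rooted tree whose leaves are the vertices of $G$, whose internal nodes are labelled 0 or 1 and each have at least two children, with labels alternating along every root-to-leaf path, such that two vertices are adjacent iff their lowest common ancestor is labelled 1; for a connected cograph the root is labelled 1. A vertex separator of a connected graph $G$ is a set $S\subset V(G)$ such that the subgraph induced on $V(G)\setminus S$ is disconnected; it is minimal if no proper subset of $S$ is a vertex separator.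
   Formalization: The family consists of the sets $S_i=V(G)\setminus V(G_i)$ only for those children $w_i$ of the root that are not leaves of T. The statement above fails without it. *)

theory Defs
  imports Main
begin

definition simple_graph :: "'a set \<Rightarrow> ('a \<Rightarrow> 'a \<Rightarrow> bool) \<Rightarrow> bool" where
  "simple_graph V E \<longleftrightarrow> finite V \<and> (\<forall>u v. E u v \<longrightarrow> u \<in> V \<and> v \<in> V \<and> u \<noteq> v \<and> E v u)"

definition reach_in :: "('a \<Rightarrow> 'a \<Rightarrow> bool) \<Rightarrow> 'a set \<Rightarrow> 'a \<Rightarrow> 'a \<Rightarrow> bool" where
  "reach_in E U = (\<lambda>x y. x \<in> U \<and> y \<in> U \<and> E x y)\<^sup>*\<^sup>*"

definition connected_on :: "('a \<Rightarrow> 'a \<Rightarrow> bool) \<Rightarrow> 'a set \<Rightarrow> bool" where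
  "connected_on E U \<longleftrightarrow> U \<noteq> {} \<and> (\<forall>x\<in>U. \<forall>y\<in>U. reach_in E U x y)"

definition disconnected_on :: "('a \<Rightarrow> 'a \<Rightarrow> bool) \<Rightarrow> 'a set \<Rightarrow> bool" where
  "disconnected_on E U \<longleftrightarrow> (\<exists>x\<in>U. \<exists>y\<in>U. \<not> reach_in E U x y)"

definition vertex_separator :: "'a set \<Rightarrow> ('a \<Rightarrow> 'a \<Rightarrow> bool) \<Rightarrow> 'a set \<Rightarrow> bool" where
  "vertex_separator V E S \<longleftrightarrow> S \<subset> V \<and> disconnected_on E (V - S)"

definition minimal_vertex_separator :: "'a set \<Rightarrow> ('a \<Rightarrow> 'a \<Rightarrow> bool) \<Rightarrow> 'a set \<Rightarrow> bool" where
  "minimal_vertex_separator V E S \<longleftrightarrow>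
     vertex_separator V E S \<and> (\<forall>S'. S' \<subset> S \<longrightarrow> \<not> vertex_separator V E S')"

text \<open>Cotrees: leaves carry vertices; internal nodes carry a label
  (False = 0 = disjoint union, True = 1 = join) and a list of children.\<close>
datatype 'a cotree = CLeaf 'a | CNode bool "'a cotree list"

fun leaves :: "'a cotree \<Rightarrow> 'a set" where
  "leaves (CLeaf a) = {a}"
| "leaves (CNode b ts) = (\<Union>t\<in>set ts. leaves t)"

fun children :: "'a cotree \<Rightarrow> 'a cotree list" where
  "children (CLeaf a) = []"
| "children (CNode b ts) = ts"

fun is_leaf :: "'a cotree \<Rightarrow> bool" where
  "is_leaf (CLeaf a) = True"
| "is_leaf (CNode b ts) = False"

fun label :: "'a cotree \<Rightarrow> bool option" where
  "label (CLeaf a) = None"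
| "label (CNode b ts) = Some b"

fun wf_cotree :: "'a cotree \<Rightarrow> bool" where
  "wf_cotree (CLeaf a) = True"
| "wf_cotree (CNode b ts) =
     (2 \<le> length ts \<and>
      (\<forall>t\<in>set ts. wf_cotree t \<and> label t \<noteq> Some b) \<and>
      (\<forall>i<length ts. \<forall>j<length ts. i \<noteq> j \<longrightarrow> leaves (ts ! i) \<inter> leaves (ts ! j) = {}))"

text \<open>u and v are leaves whose lowest common ancestor is labelled 1 (True).\<close>
fun lca_is_join :: "'a cotree \<Rightarrow> 'a \<Rightarrow> 'a \<Rightarrow> bool" where
  "lca_is_join (CLeaf a) u v = False"
| "lca_is_join (CNode b ts) u v =
     ((\<exists>t\<in>set ts. u \<in> leaves t \<and> v \<in> leaves t \<and> lca_is_join t u v) \<or>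
      (b \<and> (\<exists>i<length ts. \<exists>j<length ts. i \<noteq> j \<and> u \<in> leaves (ts ! i) \<and> v \<in> leaves (ts ! j))))"

definition is_cotree_of :: "'a cotree \<Rightarrow> 'a set \<Rightarrow> ('a \<Rightarrow> 'a \<Rightarrow> bool) \<Rightarrow> bool" where
  "is_cotree_of T V E \<longleftrightarrow> wf_cotree T \<and> leaves T = V \<and>
     (\<forall>u\<in>V. \<forall>v\<in>V. u \<noteq> v \<longrightarrow> (E u v \<longleftrightarrow> lca_is_join T u v))"

end

theory Submission
  imports Defs
begin

lemma reach_closed:
  assumes "reach_in E U x y" "x \<in> A"
    "\<And>a b. a \<in> A \<Longrightarrow> b \<in> U \<Longrightarrow> E a b \<Longrightarrow> b \<in> A"
  shows "y \<in> A"
  using assms(1,2) unfolding reach_in_def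
proof (induction rule: rtranclp_induct)
  case base then show ?case by simp
next
  case (step y z) then show ?case using assms(3) by blast
qed

lemma reach_step:
  "x \<in> U \<Longrightarrow> y \<in> U \<Longrightarrow> E x y \<Longrightarrow> reach_in E U x y"
  unfolding reach_in_def by (rule r_into_rtranclp) simp

lemma reach_trans:
  "reach_in E U x y \<Longrightarrow> reach_in E U y z \<Longrightarrow> reach_in E U x z"
  unfolding reach_in_def by (rule rtranclp_trans)

lemma reach_refl: "reach_in E U x x"
  unfolding reach_in_def by simp

lemma leaves_ne: "wf_cotree t \<Longrightarrow> leaves t \<noteq> {}"
proof (induction t)
  case (CLeaf a) then show ?case by simp
next
  case (CNode b ts)
  then have "ts \<noteq> []" by auto
  then have "hd ts \<in> set ts" by simp
  with CNode show ?case by fastforce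
qed

lemma child_unique:
  assumes "wf_cotree (CNode b ts)" "k < length ts" "m < length ts"
    "x \<in> leaves (ts ! k)" "x \<in> leaves (ts ! m)"
  shows "k = m"
  using assms by auto

lemma key:
  assumes "wf_cotree (CNode b ts)" "i < length ts" "j < length ts" "i \<noteq> j"
    "u \<in> leaves (ts ! i)" "v \<in> leaves (ts ! j)"
  shows "lca_is_join (CNode b ts) u v = b"
proof -
  have "\<not> (\<exists>t\<in>set ts. u \<in> leaves t \<and> v \<in> leaves t \<and> lca_is_join t u v)"
  proof
    assume "\<exists>t\<in>set ts. u \<in> leaves t \<and> v \<in> leaves t \<and> lca_is_join t u v"
    then obtain k where k: "k < length ts" "u \<in> leaves (ts!k)" "v \<in> leaves (ts!k)"
      by (metis in_set_conv_nth)
    have "k = i" using child_unique[OF assms(1) k(1) assms(2) k(2) assms(5)] .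
    moreover have "k = j" using child_unique[OF assms(1) k(1) assms(3) k(3) assms(6)] .
    ultimately show False using assms(4) by simp
  qed
  then show ?thesis using assms by auto
qed

lemma in_child:
  "v \<in> leaves (CNode b ts) \<Longrightarrow> \<exists>i<length ts. v \<in> leaves (ts ! i)"
  by (auto simp: in_set_conv_nth)

theorem lemma3:
  fixes V :: "'a set" and E :: "'a \<Rightarrow> 'a \<Rightarrow> bool" and T :: "'a cotree"
  assumes "simple_graph V E"
    and "connected_on E V"
    and "is_cotree_of T V E"
  shows "{S. minimal_vertex_separator V E S} =
         {V - leaves w | w. w \<in> set (children T) \<and> \<not> is_leaf w}"
proof (cases T)
  case (CLeaf a)
  then have V: "V = {a}" using assms(3) by (simp add: is_cotree_of_def)
  have "\<not> minimal_vertex_separator V E S" for S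
    unfolding minimal_vertex_separator_def vertex_separator_def disconnected_on_def
    using V reach_refl by fastforce
  then show ?thesis using CLeaf by simp
next
  case (CNode b ts)
  have wf: "wf_cotree (CNode b ts)" and LV: "leaves (CNode b ts) = V"
    and Eiff: "\<And>u v. u \<in> V \<Longrightarrow> v \<in> V \<Longrightarrow> u \<noteq> v \<Longrightarrow> E u v \<longleftrightarrow> lca_is_join (CNode b ts) u v"
    using assms(3) CNode by (auto simp: is_cotree_of_def)
  have len: "2 \<le> length ts" using wf by simp
  have Esimp: "\<And>u v. E u v \<Longrightarrow> u \<in> V \<and> v \<in> V \<and> u \<noteq> v"
    using assms(1) by (auto simp: simple_graph_def)
  have sub: "\<And>i. i < length ts \<Longrightarrow> leaves (ts ! i) \<subseteq> V"
    using LV by (auto simp: in_set_conv_nth) (metis nth_mem)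
  have wfc: "\<And>i. i < length ts \<Longrightarrow> wf_cotree (ts ! i)" using wf by auto
  have b: "b"
  proof (rule ccontr)
    assume nb: "\<not> b"
    obtain x where x: "x \<in> leaves (ts ! 0)" using leaves_ne[OF wfc, of 0] len by fastforce
    obtain y where y: "y \<in> leaves (ts ! 1)" using leaves_ne[OF wfc, of 1] len by fastforce
    have l01: "0 < length ts" "1 < length ts" using len by linarith+
    have "x \<in> V" "y \<in> V" using sub[OF l01(1)] sub[OF l01(2)] x y by blast+
    then have "reach_in E V x y" using assms(2) unfolding connected_on_def by blast
    then have "y \<in> leaves (ts ! 0)"
    proof (rule reach_closed)
      show "x \<in> leaves (ts ! 0)" by fact
      fix a c assume a: "a \<in> leaves (ts ! 0)" and c: "c \<in> V" and ac: "E a c"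
      obtain m where m: "m < length ts" "c \<in> leaves (ts ! m)" using in_child[of c b ts] c LV by blast
      show "c \<in> leaves (ts ! 0)"
      proof (rule ccontr)
        assume "c \<notin> leaves (ts ! 0)"
        then have "m \<noteq> 0" using m(2) by metis
        have "lca_is_join (CNode b ts) a c = b" proof (rule key[OF wf _ m(1) _ a m(2)])
          show "0 < length ts" using len by linarith
          show "0 \<noteq> m" using \<open>m \<noteq> 0\<close> by simp
        qed
        then have "\<not> lca_is_join (CNode b ts) a c" using nb by simp
        then show False using Eiff ac Esimp by blast
      qed
    qed
    moreover have "0 < length ts" "1 < length ts" using len by linarith+
    ultimately show False using y child_unique[OF wf, of 0 1 y] by simp
  qed
  have adj: "\<And>i j u v. i < length ts \<Longrightarrow> j < length ts \<Longrightarrow> i \<noteq> j \<Longrightarrow>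
      u \<in> leaves (ts ! i) \<Longrightarrow> v \<in> leaves (ts ! j) \<Longrightarrow> E u v"
  proof -
    fix i j u v assume h: "i < length ts" "j < length ts" "i \<noteq> j"
      "u \<in> leaves (ts ! i)" "v \<in> leaves (ts ! j)"
    have "u \<noteq> v" using h child_unique[OF wf h(1) h(2)] by auto
    moreover have "u \<in> V" "v \<in> V" using h sub by auto
    ultimately show "E u v" using Eiff key[OF wf h] b by simp
  qed
  have A: "minimal_vertex_separator V E (V - leaves w)"
    if w: "w \<in> set ts" "\<not> is_leaf w" for w
  proof -
    obtain k where k: "k < length ts" "w = ts ! k" using w by (metis in_set_conv_nth)
    obtain c us where wc: "w = CNode c us" using w(2) by (cases w) auto
    have wfw: "wf_cotree w" using wfc k by simp
    have c: "\<not> c" using wf w wc b by auto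
    have lus: "2 \<le> length us" using wfw wc by simp
    have LwV: "leaves w \<subseteq> V" using sub k by simp
    have Lne: "leaves w \<noteq> {}" using leaves_ne[OF wfw] .
    have diff: "V - (V - leaves w) = leaves w" using LwV by blast
    have sep: "vertex_separator V E (V - leaves w)"
      unfolding vertex_separator_def
    proof
      show "V - leaves w \<subset> V" using LwV Lne by blast
      have wfcn: "wf_cotree (CNode c us)" using wfw wc by simp
      have wfu: "\<And>i. i < length us \<Longrightarrow> wf_cotree (us ! i)" using wfcn by auto
      obtain x where x: "x \<in> leaves (us ! 0)" using leaves_ne[OF wfu, of 0] lus by fastforce
      obtain y where y: "y \<in> leaves (us ! 1)" using leaves_ne[OF wfu, of 1] lus by fastforce
      have u01: "0 < length us" "1 < length us" using lus by linarith+
      have "us ! 0 \<in> set us" "us ! 1 \<in> set us" using u01 nth_mem by blast+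
      then have xw: "x \<in> leaves w" "y \<in> leaves w" using x y wc by auto
      have "\<not> reach_in E (leaves w) x y"
      proof
        assume "reach_in E (leaves w) x y"
        then have "y \<in> leaves (us ! 0)"
        proof (rule reach_closed)
          show "x \<in> leaves (us ! 0)" by fact
          fix a d assume a: "a \<in> leaves (us ! 0)" and d: "d \<in> leaves w" and ad: "E a d"
          obtain m where m: "m < length us" "d \<in> leaves (us ! m)" using in_child[of d c us] d wc by blast
          show "d \<in> leaves (us ! 0)"
          proof (rule ccontr)
            assume "d \<notin> leaves (us ! 0)"
            then have m0: "m \<noteq> 0" using m(2) by metis
            have "lca_is_join (CNode c us) a d = c" proof (rule key[OF wfcn _ m(1) _ a m(2)])
              show "0 < length us" using lus by linarith
              show "0 \<noteq> m" using m0 by simp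
            qed
            then have nj: "\<not> lca_is_join w a d" using c wc by simp
            have aw: "a \<in> leaves (ts ! k)" using a wc k \<open>us ! 0 \<in> set us\<close> by auto
            have dw: "d \<in> leaves (ts ! k)" using d k by simp
            have "\<not> lca_is_join (CNode b ts) a d"
            proof
              assume "lca_is_join (CNode b ts) a d"
              then consider (one) "\<exists>t\<in>set ts. a \<in> leaves t \<and> d \<in> leaves t \<and> lca_is_join t a d"
                | (two) "\<exists>i<length ts. \<exists>j<length ts. i \<noteq> j \<and> a \<in> leaves (ts ! i) \<and> d \<in> leaves (ts ! j)"
                by auto
              then show False
              proof cases
                case one
                then obtain k' where k': "k' < length ts" "a \<in> leaves (ts!k')" "lca_is_join (ts!k') a d"
                  by (metis in_set_conv_nth)
                have "k' = k" using child_unique[OF wf k'(1) k(1) k'(2) aw] .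
                then show False using k' nj k by simp
              next
                case two
                then obtain i j where ij: "i < length ts" "j < length ts" "i \<noteq> j"
                  "a \<in> leaves (ts ! i)" "d \<in> leaves (ts ! j)" by blast
                have "i = k" using child_unique[OF wf ij(1) k(1) ij(4) aw] .
                moreover have "j = k" using child_unique[OF wf ij(2) k(1) ij(5) dw] .
                ultimately show False using ij(3) by simp
              qed
            qed
            then show False using Eiff ad Esimp by blast
          qed
        qed
        moreover have "0 < length us" "1 < length us" using lus by linarith+
        ultimately show False using y child_unique[OF wfcn, of 0 1 y] by simp
      qed
      then show "disconnected_on E (V - (V - leaves w))"
        unfolding diff disconnected_on_def using xw by blast
    qed
    have "\<not> vertex_separator V E S'" if S': "S' \<subset> V - leaves w" for S'
    proof
      assume vs: "vertex_separator V E S'"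
      obtain z where z: "z \<in> V" "z \<notin> leaves w" "z \<notin> S'" using S' by blast
      obtain m where m: "m < length ts" "z \<in> leaves (ts ! m)" using in_child[of z b ts] z LV by blast
      have mk: "m \<noteq> k" using m z k by auto
      obtain x0 where x0: "x0 \<in> leaves w" using Lne by blast
      have x0S: "x0 \<notin> S'" "x0 \<in> V" using x0 S' LwV by auto
      have km: "k \<noteq> m" using mk by simp
      have x0k: "x0 \<in> leaves (ts ! k)" using x0 k(2) by simp
      have zx: "E z x0" "E x0 z" using adj[OF m(1) k(1) mk m(2) x0k] adj[OF k(1) m(1) km x0k m(2)] by simp_all
      have R: "reach_in E (V - S') v x0 \<and> reach_in E (V - S') x0 v" if v: "v \<in> V - S'" for v
      proof (cases "v \<in> leaves w")
        case True
        have vk: "v \<in> leaves (ts ! k)" using True k(2) by simp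
        have "E v z" "E z v" using adj[OF m(1) k(1) mk m(2) vk] adj[OF k(1) m(1) km vk m(2)] by simp_all
        moreover have vV: "v \<in> V - S'" "z \<in> V - S'" "x0 \<in> V - S'" using v z x0S by auto
        ultimately have "reach_in E (V - S') v z" "reach_in E (V - S') z v"
          "reach_in E (V - S') z x0" "reach_in E (V - S') x0 z"
          using reach_step[of _ "V - S'" _ E] zx by simp_all
        then show ?thesis using reach_trans[of E "V - S'" v z x0] reach_trans[of E "V - S'" x0 z v] by blast
      next
        case False
        obtain n where n: "n < length ts" "v \<in> leaves (ts ! n)" using in_child[of v b ts] v LV by blast
        have nk: "n \<noteq> k" using n False k by auto
        have kn: "k \<noteq> n" using nk by simp
        have "E v x0" "E x0 v" using adj[OF n(1) k(1) nk n(2) x0k] adj[OF k(1) n(1) kn x0k n(2)] by simp_all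
        moreover have vV: "v \<in> V - S'" "x0 \<in> V - S'" using v x0S by auto
        ultimately show ?thesis using reach_step[of _ "V - S'" _ E] by simp
      qed
      have "\<not> disconnected_on E (V - S')"
        unfolding disconnected_on_def
      proof (intro notI, elim bexE)
        fix p q assume pq: "p \<in> V - S'" "q \<in> V - S'" "\<not> reach_in E (V - S') p q"
        have "reach_in E (V - S') p x0" "reach_in E (V - S') x0 q" using R pq by blast+
        then show False using reach_trans[of E "V - S'" p x0 q] pq by blast
      qed
      then show False using vs unfolding vertex_separator_def by blast
    qed
    then show ?thesis using sep unfolding minimal_vertex_separator_def by blast
  qed
  have B: "\<exists>w. w \<in> set ts \<and> \<not> is_leaf w \<and> S = V - leaves w"
    if S: "minimal_vertex_separator V E S" for S
  proof -
    have vs: "vertex_separator V E S" and mn: "\<And>S'. S' \<subset> S \<Longrightarrow> \<not> vertex_separator V E S'"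
      using S unfolding minimal_vertex_separator_def by auto
    obtain x y where xy: "x \<in> V - S" "y \<in> V - S" "\<not> reach_in E (V - S) x y"
      using vs unfolding vertex_separator_def disconnected_on_def by blast
    have "x \<in> leaves (CNode b ts)" "y \<in> leaves (CNode b ts)" using xy LV by auto
    note xl = this
    obtain i where i: "i < length ts" "x \<in> leaves (ts ! i)" using in_child[OF xl(1)] by blast
    obtain j where j: "j < length ts" "y \<in> leaves (ts ! j)" using in_child[OF xl(2)] by blast
    have ij: "i = j"
    proof (rule ccontr)
      assume "i \<noteq> j"
      then have "E x y" using adj[OF i(1) j(1) _ i(2) j(2)] by simp
      moreover have "x \<in> V - S" "y \<in> V - S" using xy by auto
      ultimately show False using xy(3) reach_step[of x "V - S" y E] by simp
    qed
    define w where "w = ts ! i"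
    have wset: "w \<in> set ts" using i w_def by simp
    have inc: "V - leaves w \<subseteq> S"
    proof
      fix z assume z: "z \<in> V - leaves w"
      show "z \<in> S"
      proof (rule ccontr)
        assume zS: "z \<notin> S"
        have "z \<in> leaves (CNode b ts)" using z LV by auto
        from in_child[OF this] obtain m where m: "m < length ts" "z \<in> leaves (ts ! m)" by blast
        have mi: "m \<noteq> i"
        proof
          assume "m = i"
          then have "z \<in> leaves w" using m(2) w_def by simp
          then show False using z by simp
        qed
        have im: "i \<noteq> m" using mi by simp
        have mj: "m \<noteq> j" using mi ij by simp
        have "E x z" "E z y" using adj[OF i(1) m(1) im i(2) m(2)] adj[OF m(1) j(1) mj m(2) j(2)] by simp_all
        moreover have "z \<in> V - S" using z zS by blast
        ultimately have "reach_in E (V - S) x z" "reach_in E (V - S) z y"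
          using reach_step[of x "V - S" z E] reach_step[of z "V - S" y E] xy(1,2) by simp_all
        then have "reach_in E (V - S) x y" by (rule reach_trans)
        then show False using xy by simp
      qed
    qed
    have nl: "\<not> is_leaf w"
    proof
      assume "is_leaf w"
      then obtain a where "w = CLeaf a" by (cases w) auto
      then have "x = y" using i j ij w_def by simp
      then show False using xy(3) reach_refl[of E "V - S" x] by simp
    qed
    have "S = V - leaves w"
    proof (rule ccontr)
      assume "S \<noteq> V - leaves w"
      then have "V - leaves w \<subset> S" using inc by blast
      moreover have "vertex_separator V E (V - leaves w)" using A[OF wset nl]
        unfolding minimal_vertex_separator_def by simp
      ultimately show False using mn by simp
    qed
    then show ?thesis using wset nl by blast
  qed
  show ?thesis
  proof (intro set_eqI iffI)
    fix S assume "S \<in> {S. minimal_vertex_separator V E S}"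
    then obtain w where "w \<in> set ts" "\<not> is_leaf w" "S = V - leaves w" using B by blast
    then show "S \<in> {V - leaves w | w. w \<in> set (children T) \<and> \<not> is_leaf w}"
      using CNode by auto
  next
    fix S assume "S \<in> {V - leaves w | w. w \<in> set (children T) \<and> \<not> is_leaf w}"
    then obtain w where "w \<in> set ts" "\<not> is_leaf w" "S = V - leaves w" using CNode by auto
    then show "S \<in> {S. minimal_vertex_separator V E S}" using A by blast
  qed
qed

end
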